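(* Let $K$ be a virtual knot and $r\geq 2$ an integer, and let $L(K;r)=K_1\cup\dots\cup K_r$ be the $r$-multiplexed virtual link of $K$. Then for all integers $i,j$ with $1\leq i\neq j\leq r$, \[\mathrm{Lk}(K_i,K_j)=\sum_{n\equiv i-j \pmod r} J_n(K).\]
   Context: Virtual link diagrams have real (positive/negative) and virtual crossings; virtual links are equivalence classes under generalized Reidemeister moves (R1–R3, VR1–VR4). $r$-multiplexing: for a virtual knot diagram $D$ and $r\geq2$, $L(D;r)$ is obtained by replacing $D$ with a bundle of $r$ parallel strands, positions numbered $1,\dots,r$ left to right w.r.t. the orientation. At each positive (resp. negative) crossing of $D$ the two bundles cross in an $r\times r$ grid where the position-$p$ strand of the over-bundle crosses the position-$p$ strand of the under-bundle at a positive (resp. negative) real crossing with the over-bundle strand on top, all other grid crossings being virtual. At each virtual crossing of $D$ the bundles cross in an $r\times r$ grid of virtual crossings, and each bundle additionally has its strands cyclically shifted via $r-1$ virtual crossings: position $p$ goes to $p-1\pmod r$ if the other string of $D$ crosses the bundle from left to right, and to $p+1 \pmod r$ if from right to left. The result has $r$ components; with a base point on $D$, the $i$th component is the one through position $i$ there. The equivalence class $L(K;r)$ of $L(D;r)$ for a diagram $D$ of $K$ is independent of $D$. Index: for a real crossing $c$ of a diagram, its specified path $\rho$ runs along the diagram from the overcrossing to the undercrossing at $c$; walking along $\rho$, each real crossing on $\rho$ contributes $+1$ if the other string crosses $\rho$ from left to right and $-1$ otherwise; $\mathrm{ind}(c)$ is the sum. For a virtual knot diagram $D$ and integer $n$,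 $J_n(D)$ is the sum of signs of real crossings of index $n$; for $n\neq0$ it is an invariant $J_n(K)$ of the virtual knot $K$ (the $n$-writhe). $(i,j)$-linking number: for a diagram $D_1\cup\dots\cup D_r$ of a virtual link and $i\neq j$, $\mathrm{Lk}(K_i,K_j)$ is the sum of signs of real crossings where $D_i$ passes over $D_j$; it is a virtual link invariant. *)

theory Defs
  imports Main "HOL-Number_Theory.Cong"
begin

(* A virtual knot diagram D (one component, with a base point) is encoded combinatorially.
   Walking once around D from the base point along its orientation we meet 2*nc D
   passages, numbered 0 .. 2*nc D - 1; every crossing (real or virtual), numbered
   0 .. nc D - 1, is met exactly twice.
   cr t   : the crossing met at passage t
   virt k : crossing k is virtual
   ovr t  : at passage t the diagram passes over (relevant for real crossings)
   lr t   : at passage t the other string of D crosses the present strand from left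
            to right (w.r.t. the orientation of the present strand). *)
record vdiag =
  nc   :: nat
  cr   :: "nat \<Rightarrow> nat"
  virt :: "nat \<Rightarrow> bool"
  ovr  :: "nat \<Rightarrow> bool"
  lr   :: "nat \<Rightarrow> bool"

definition npass :: "vdiag \<Rightarrow> nat" where
  "npass D = 2 * nc D"

definition partner :: "vdiag \<Rightarrow> nat \<Rightarrow> nat" where
  "partner D t = (THE s. s < npass D \<and> s \<noteq> t \<and> cr D s = cr D t)"

(* Planarity (realisability in the plane) of the underlying 4-valent curve:
   half-edges at passage t are (t,True) = outgoing, (t,False) = incoming;
   the counterclockwise successor of a half-edge at a crossing is determined by lr.
   Darts (e,True)/(e,False) traverse edge e (from passage e to passage e+1 mod 2n)
   forwards/backwards.  The face-tracing permutation has exactly nc+2 orbits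
   iff the curve embeds in the sphere (Euler: V - E + F = 2 with V = n, E = 2n). *)
definition arrive :: "vdiag \<Rightarrow> nat \<times> bool \<Rightarrow> nat \<times> bool" where
  "arrive D d = (if snd d then (Suc (fst d) mod npass D, False) else (fst d, True))"

definition leave :: "vdiag \<Rightarrow> nat \<times> bool \<Rightarrow> nat \<times> bool" where
  "leave D h = (if snd h then (fst h, True) else ((fst h + npass D - 1) mod npass D, False))"

definition next_ccw :: "vdiag \<Rightarrow> nat \<times> bool \<Rightarrow> nat \<times> bool" where
  "next_ccw D h = (partner D (fst h), if lr D (fst h) then \<not> snd h else snd h)"

definition face_step :: "vdiag \<Rightarrow> nat \<times> bool \<Rightarrow> nat \<times> bool" where
  "face_step D d = leave D (next_ccw D (arrive D d))"

definition darts :: "vdiag \<Rightarrow> (nat \<times> bool) set" where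
  "darts D = {..<npass D} \<times> UNIV"

definition num_faces :: "vdiag \<Rightarrow> nat" where
  "num_faces D = card ((\<lambda>d. {d'. (d, d') \<in> {(x, face_step D x) | x. x \<in> darts D}\<^sup>*}) ` darts D)"

definition planar :: "vdiag \<Rightarrow> bool" where
  "planar D \<longleftrightarrow> nc D = 0 \<or> num_faces D = nc D + 2"

definition wf_vdiag :: "vdiag \<Rightarrow> bool" where
  "wf_vdiag D \<longleftrightarrow>
     (\<forall>t < npass D. cr D t < nc D) \<and>
     (\<forall>k < nc D. card {t. t < npass D \<and> cr D t = k} = 2) \<and>
     (\<forall>t < npass D. \<forall>s < npass D. t \<noteq> s \<and> cr D t = cr D s \<longrightarrow>
         lr D s = (\<not> lr D t) \<and> (\<not> virt D (cr D t) \<longrightarrow> ovr D s = (\<not> ovr D t))) \<and>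
     planar D"

definition real_crossings :: "vdiag \<Rightarrow> nat set" where
  "real_crossings D = {k. k < nc D \<and> \<not> virt D k}"

definition opass :: "vdiag \<Rightarrow> nat \<Rightarrow> nat" where
  "opass D k = (THE t. t < npass D \<and> cr D t = k \<and> ovr D t)"

definition upass :: "vdiag \<Rightarrow> nat \<Rightarrow> nat" where
  "upass D k = (THE t. t < npass D \<and> cr D t = k \<and> \<not> ovr D t)"

(* sign of a real crossing: positive iff the under string crosses the over string
   from right to left (right-handed crossing) *)
definition csign :: "vdiag \<Rightarrow> nat \<Rightarrow> int" where
  "csign D k = (if lr D (opass D k) then -1 else 1)"

(* passages strictly between passage a and passage b, walking forward from a *)
definition on_path :: "vdiag \<Rightarrow> nat \<Rightarrow> nat \<Rightarrow> nat \<Rightarrow> bool" where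
  "on_path D a b s \<longleftrightarrow> s < npass D \<and>
     0 < (s + npass D - a) mod npass D \<and>
     (s + npass D - a) mod npass D < (b + npass D - a) mod npass D"

(* index of a real crossing: along the specified path from its overcrossing to its
   undercrossing, each real crossing passage contributes +1 / -1 *)
definition ind :: "vdiag \<Rightarrow> nat \<Rightarrow> int" where
  "ind D k = (\<Sum>s \<in> {s. on_path D (opass D k) (upass D k) s \<and> \<not> virt D (cr D s)}.
                 if lr D s then 1 else -1)"

definition J :: "vdiag \<Rightarrow> int \<Rightarrow> int" where
  "J D n = (\<Sum>k \<in> {k \<in> real_crossings D. ind D k = n}. csign D k)"

(* Net cyclic shift of bundle positions accumulated at the virtual
   crossings met before passage t (position p \<mapsto> p-1 if the other string crosses the
   bundle from left to right, p \<mapsto> p+1 otherwise). *)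
definition shift :: "vdiag \<Rightarrow> nat \<Rightarrow> int" where
  "shift D t = (\<Sum>s \<in> {s. s < t \<and> virt D (cr D s)}. if lr D s then -1 else 1)"

(* The component (numbered 1..r by the position at the base point) of L(D;r) to which
   the strand at position p (1..r) of the bundle at passage t belongs. *)
definition mcomp :: "vdiag \<Rightarrow> nat \<Rightarrow> nat \<Rightarrow> nat \<Rightarrow> nat" where
  "mcomp D r t p = nat ((int p - 1 - shift D t) mod int r) + 1"

(* Real crossings of L(D;r): pairs (k,p), k a real crossing of D, p in 1..r; the
   position-p strand of the over-bundle crosses over the position-p strand of the
   under-bundle with the sign of k.  All other crossings of L(D;r) are virtual. *)
definition mplx_real_crossings :: "vdiag \<Rightarrow> nat \<Rightarrow> (nat \<times> nat) set" where
  "mplx_real_crossings D r = real_crossings D \<times> {1..r}"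

definition mplx_over_comp :: "vdiag \<Rightarrow> nat \<Rightarrow> nat \<times> nat \<Rightarrow> nat" where
  "mplx_over_comp D r c = mcomp D r (opass D (fst c)) (snd c)"

definition mplx_under_comp :: "vdiag \<Rightarrow> nat \<Rightarrow> nat \<times> nat \<Rightarrow> nat" where
  "mplx_under_comp D r c = mcomp D r (upass D (fst c)) (snd c)"

definition mplx_sign :: "vdiag \<Rightarrow> nat \<Rightarrow> nat \<times> nat \<Rightarrow> int" where
  "mplx_sign D r c = csign D (fst c)"

definition Lk_mplx :: "vdiag \<Rightarrow> nat \<Rightarrow> nat \<Rightarrow> nat \<Rightarrow> int" where
  "Lk_mplx D r i j = (\<Sum>c \<in> {c \<in> mplx_real_crossings D r.
        mplx_over_comp D r c = i \<and> mplx_under_comp D r c = j}. mplx_sign D r c)"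

end

theory Submission
  imports Defs
begin


definition orb :: "('a \<Rightarrow> 'a) \<Rightarrow> 'a set \<Rightarrow> 'a \<Rightarrow> 'a set" where
  "orb f A x = {y. (x, y) \<in> {(z, f z) | z. z \<in> A}\<^sup>*}"

lemma orb_self: "x \<in> orb f A x"
  by (simp add: orb_def)

lemma orb_step: "y \<in> orb f A x \<Longrightarrow> y \<in> A \<Longrightarrow> f y \<in> orb f A x"
  unfolding orb_def by (auto intro: rtrancl_into_rtrancl)

lemma orb_induct[consumes 1, case_names base step]:
  assumes "y \<in> orb f A x" "P x" "\<And>z. z \<in> orb f A x \<Longrightarrow> z \<in> A \<Longrightarrow> P z \<Longrightarrow> P (f z)"
  shows "P y"
proof -
  have "(x, y) \<in> {(z, f z) | z. z \<in> A}\<^sup>*" using assms(1) by (simp add: orb_def)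
  then show ?thesis
  proof (induction rule: rtrancl_induct)
    case base then show ?case using assms(2) by simp
  next
    case (step y z)
    then have "y \<in> A" "z = f y" by auto
    moreover have "y \<in> orb f A x" using step(1) by (simp add: orb_def)
    ultimately show ?case using step assms(3) by blast
  qed
qed

lemma orb_trans: "y \<in> orb f A x \<Longrightarrow> z \<in> orb f A y \<Longrightarrow> z \<in> orb f A x"
  unfolding orb_def by (auto elim: rtrancl_trans)

lemma orb_closed:
  assumes "y \<in> orb f A x" "x \<in> B" "\<And>z. z \<in> A \<Longrightarrow> z \<in> B \<Longrightarrow> f z \<in> B"
  shows "y \<in> B"
  using assms(1) by (induction rule: orb_induct) (use assms in auto)

lemma orb_const:
  assumes "y \<in> orb f A x" "\<And>z. z \<in> A \<Longrightarrow> W (f z) = W z"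
  shows "W y = W x"
  using assms(1) by (induction rule: orb_induct) (use assms in auto)

lemma orb_agree:
  assumes "\<And>z. z \<in> orb f1 A x \<Longrightarrow> z \<in> A \<Longrightarrow> f2 z = f1 z"
  shows "orb f1 A x \<subseteq> orb f2 A x"
proof
  fix y assume "y \<in> orb f1 A x"
  then show "y \<in> orb f2 A x"
  proof (induction rule: orb_induct)
    case base then show ?case by (rule orb_self)
  next
    case (step z)
    then have "f2 z = f1 z" using assms by blast
    then show ?case using orb_step[OF step(3) step(2)] by simp
  qed
qed

locale perm_on =
  fixes f :: "'a \<Rightarrow> 'a" and A :: "'a set"
  assumes fin: "finite A" and maps: "\<And>x. x \<in> A \<Longrightarrow> f x \<in> A" and inj: "inj_on f A"
begin

lemma orb_sub: "x \<in> A \<Longrightarrow> orb f A x \<subseteq> A"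
  using orb_closed[of _ f A x A] maps by blast

lemma orb_back:
  assumes x: "x \<in> A" shows "x \<in> orb f A (f x)"
proof -
  let ?S = "orb f A (f x)"
  have fx: "f x \<in> A" using maps x by blast
  have sub: "?S \<subseteq> A" using orb_sub fx by blast
  have "f ` ?S \<subseteq> ?S"
  proof (rule image_subsetI)
    fix y assume "y \<in> ?S" then show "f y \<in> ?S" using orb_step[of y f A "f x"] sub by blast
  qed
  moreover have "inj_on f ?S" using inj sub inj_on_subset by blast
  moreover have "finite ?S" using fin sub finite_subset by blast
  ultimately have "f ` ?S = ?S" using endo_inj_surj by blast
  then obtain w where w: "w \<in> ?S" "f w = f x" using orb_self[of "f x" f A] by (metis imageE)
  then have "w = x" using inj sub x unfolding inj_on_def by blast
  then show ?thesis using w by simp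
qed

lemma orb_sym:
  assumes "x \<in> A" "y \<in> orb f A x" shows "x \<in> orb f A y"
  using assms(2)
proof (induction rule: orb_induct)
  case base then show ?case by (rule orb_self)
next
  case (step z)
  then show ?case using orb_trans[OF orb_back[OF step(2)] step(3)] by simp
qed

lemma orb_eq:
  assumes "x \<in> A" "y \<in> orb f A x" shows "orb f A y = orb f A x"
proof
  show "orb f A y \<subseteq> orb f A x" using orb_trans[OF assms(2)] by blast
  show "orb f A x \<subseteq> orb f A y" using orb_trans[OF orb_sym[OF assms]] by blast
qed

lemma orb_mem_iff:
  assumes "x \<in> A" "y \<in> A" shows "y \<in> orb f A x \<longleftrightarrow> orb f A y = orb f A x"
proof
  assume "y \<in> orb f A x" then show "orb f A y = orb f A x" by (rule orb_eq[OF assms(1)])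
next
  assume "orb f A y = orb f A x" then show "y \<in> orb f A x" using orb_self[of y f A] by simp
qed

lemma orb_inv:
  assumes "x \<in> A" shows "f x \<in> orb f A y \<longleftrightarrow> x \<in> orb f A y"
proof
  assume "x \<in> orb f A y" then show "f x \<in> orb f A y" using orb_step[of x f A y] assms by simp
next
  assume h: "f x \<in> orb f A y"
  show "x \<in> orb f A y" using orb_trans[OF h orb_back[OF assms]] .
qed

end

definition sw :: "'a \<Rightarrow> 'a \<Rightarrow> 'a \<Rightarrow> 'a" where
  "sw a b x = (if x = a then b else if x = b then a else x)"

definition gsw :: "('a \<Rightarrow> 'a) \<Rightarrow> 'a \<Rightarrow> 'a \<Rightarrow> 'a \<Rightarrow> 'a" where
  "gsw f a b = f \<circ> sw a b"

locale perm_swap = perm_on +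
  fixes a b
  assumes a: "a \<in> A" and b: "b \<in> A" and ab: "a \<noteq> b"
begin

abbreviation g where "g \<equiv> gsw f a b"

lemma g_def: "g = f \<circ> sw a b" by (simp add: gsw_def)

lemma g_perm: "perm_on g A"
proof
  show "finite A" by (rule fin)
  have swA: "sw a b x \<in> A" if "x \<in> A" for x using that a b by (simp add: sw_def)
  show "\<And>x. x \<in> A \<Longrightarrow> g x \<in> A" using swA maps by (simp add: g_def)
  have swsw: "sw a b (sw a b x) = x" for x by (simp add: sw_def)
  show "inj_on g A"
  proof (rule inj_onI)
    fix x y assume "x \<in> A" "y \<in> A" "g x = g y"
    then have "sw a b x = sw a b y" using inj swA unfolding inj_on_def g_def by simp
    then show "x = y" using swsw by metis
  qed
qed

lemma same_orb:
  assumes x: "x \<in> A" and na: "a \<notin> orb f A x" and nb: "b \<notin> orb f A x"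
  shows "orb g A x = orb f A x"
proof
  show "orb g A x \<subseteq> orb f A x"
  proof
    fix y assume "y \<in> orb g A x"
    then show "y \<in> orb f A x"
    proof (induction rule: orb_induct)
      case base then show ?case by (rule orb_self)
    next
      case (step z)
      then have "g z = f z" using na nb by (auto simp: g_def sw_def)
      then show ?case using step orb_step by metis
    qed
  qed
next
  show "orb f A x \<subseteq> orb g A x"
  proof
    fix y assume h: "y \<in> orb f A x"
    then show "y \<in> orb g A x"
    proof (induction rule: orb_induct)
      case base then show ?case by (rule orb_self)
    next
      case (step z)
      then have "g z = f z" using na nb by (auto simp: g_def sw_def)
      then show ?case using step orb_step by metis
    qed
  qed
qed

lemma merge:
  assumes nb: "b \<notin> orb f A a" shows "b \<in> orb g A a"
proof -
  have fb: "f b \<in> A" using maps b by blast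
  have ga: "g a = f b" by (simp add: g_def sw_def)
  have naOb: "a \<notin> orb f A b" using perm_on.orb_sym[OF perm_on_axioms b] nb by blast
  have "\<forall>y. y \<in> orb f A (f b) \<longrightarrow> y \<in> orb g A (f b) \<or> b \<in> orb g A (f b)"
  proof (intro allI impI)
    fix y assume "y \<in> orb f A (f b)"
    then show "y \<in> orb g A (f b) \<or> b \<in> orb g A (f b)"
    proof (induction rule: orb_induct)
      case base then show ?case using orb_self by metis
    next
      case (step z)
      show ?case
      proof (cases "z = b")
        case True then show ?thesis using step by blast
      next
        case False
        have "z \<in> orb f A b" using step(1) orb_trans orb_step[OF orb_self b] by metis
        then have "z \<noteq> a" using naOb by blast
        then have "g z = f z" using False by (auto simp: g_def sw_def)
        then show ?thesis using step orb_step by metis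
      qed
    qed
  qed
  then have "b \<in> orb g A (f b)" using orb_back[OF b] by blast
  moreover have "f b \<in> orb g A a" using orb_step[OF orb_self a] ga by metis
  ultimately show ?thesis using orb_trans by metis
qed

lemma count:
  "card (orb g A ` A) + (if b \<in> orb f A a then 1 else 2) =
   card (orb f A ` A) + (if b \<in> orb g A a then 1 else 2)"
proof -
  interpret G: perm_on g A by (rule g_perm)
  define R where "R = orb f A ` {x \<in> A. a \<notin> orb f A x \<and> b \<notin> orb f A x}"
  have RG: "R = orb g A ` {x \<in> A. a \<notin> orb g A x \<and> b \<notin> orb g A x}"
  proof
    show "R \<subseteq> orb g A ` {x \<in> A. a \<notin> orb g A x \<and> b \<notin> orb g A x}"
    proof
      fix S assume "S \<in> R"
      then obtain x where x: "x \<in> A" "a \<notin> orb f A x" "b \<notin> orb f A x" "S = orb f A x"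
        unfolding R_def by blast
      then have "orb g A x = orb f A x" using same_orb by blast
      then show "S \<in> orb g A ` {x \<in> A. a \<notin> orb g A x \<and> b \<notin> orb g A x}" using x by auto
    qed
  next
    show "orb g A ` {x \<in> A. a \<notin> orb g A x \<and> b \<notin> orb g A x} \<subseteq> R"
    proof
      fix S assume "S \<in> orb g A ` {x \<in> A. a \<notin> orb g A x \<and> b \<notin> orb g A x}"
      then obtain x where x: "x \<in> A" "a \<notin> orb g A x" "b \<notin> orb g A x" "S = orb g A x"
        by blast
      interpret GS: perm_swap g A a b
        using g_perm a b ab by (simp add: perm_swap_def perm_swap_axioms_def)
      have "gsw g a b = f" by (simp add: gsw_def fun_eq_iff sw_def)
      then have "orb f A x = orb g A x" using GS.same_orb x by metis
      then show "S \<in> R" using x unfolding R_def by auto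
    qed
  qed
  have gen: "orb h A ` A = R' \<union> {orb h A a, orb h A b}"
    if "perm_on h A" "R' = orb h A ` {x \<in> A. a \<notin> orb h A x \<and> b \<notin> orb h A x}" for h R'
  proof -
    interpret H: perm_on h A by (rule that(1))
    show ?thesis
    proof
      show "orb h A ` A \<subseteq> R' \<union> {orb h A a, orb h A b}"
      proof
        fix S assume "S \<in> orb h A ` A"
        then obtain x where x: "x \<in> A" "S = orb h A x" by blast
        show "S \<in> R' \<union> {orb h A a, orb h A b}"
        proof (cases "a \<in> orb h A x")
          case True then show ?thesis using H.orb_eq x by blast
        next
          case False
          show ?thesis
          proof (cases "b \<in> orb h A x")
            case True then show ?thesis using H.orb_eq x by blast
          next
            case False2: False
            then show ?thesis using False x that(2) by blast
          qed
        qed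
      qed
    next
      show "R' \<union> {orb h A a, orb h A b} \<subseteq> orb h A ` A" using that(2) a b by auto
    qed
  qed
  have disj: "orb h A a \<notin> R' \<and> orb h A b \<notin> R'"
    if "R' = orb h A ` {x \<in> A. a \<notin> orb h A x \<and> b \<notin> orb h A x}" for h R'
  proof -
    have "a \<in> orb h A a" "b \<in> orb h A b" by (rule orb_self)+
    then show "orb h A a \<notin> R' \<and> orb h A b \<notin> R'" using that by auto
  qed
  have two: "card {orb h A a, orb h A b} = (if b \<in> orb h A a then 1 else 2)"
    if "perm_on h A" for h
  proof -
    interpret H: perm_on h A by (rule that)
    have "orb h A a = orb h A b \<longleftrightarrow> b \<in> orb h A a" using H.orb_mem_iff a b by metis
    then show ?thesis by auto
  qed
  have finR: "finite R" unfolding R_def using fin by simp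
  have "card (orb f A ` A) = card R + (if b \<in> orb f A a then 1 else 2)"
  proof -
    have "R \<inter> {orb f A a, orb f A b} = {}" using disj[OF R_def] by blast
    then have "card (R \<union> {orb f A a, orb f A b}) = card R + card {orb f A a, orb f A b}"
      using finR card_Un_disjoint[of R "{orb f A a, orb f A b}"] by simp
    then show ?thesis using gen[OF perm_on_axioms R_def] two[OF perm_on_axioms] by simp
  qed
  moreover have "card (orb g A ` A) = card R + (if b \<in> orb g A a then 1 else 2)"
  proof -
    have "R \<inter> {orb g A a, orb g A b} = {}" using disj[OF RG] by blast
    then have "card (R \<union> {orb g A a, orb g A b}) = card R + card {orb g A a, orb g A b}"
      using finR card_Un_disjoint[of R "{orb g A a, orb g A b}"] by simp
    then show ?thesis using gen[OF g_perm RG] two[OF g_perm] by simp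
  qed
  ultimately show ?thesis by simp
qed

end



lemma modsub: "(x::nat) < N \<Longrightarrow> o' < N \<Longrightarrow> (x + N - o') mod N = (if o' \<le> x then x - o' else x + N - o')"
proof (cases "o' \<le> x")
  case True
  assume "x < N"
  then have e: "x + N - o' = (x - o') + N" using True by simp
  have "(x + N - o') mod N = ((x - o') + N) mod N" by (simp only: e)
  also have "\<dots> = (x - o') mod N" by (rule mod_add_self2)
  also have "\<dots> = x - o'" using \<open>x < N\<close> by simp
  finally show ?thesis using True by simp
qed simp

lemma prd: "(t::nat) < N \<Longrightarrow> (t + N - 1) mod N = (if t = 0 then N - 1 else t - 1)"
  using modsub[of t N 1] by (cases "t = 0") auto

lemma sucmod: "(t::nat) < N \<Longrightarrow> Suc t mod N = (if Suc t = N then 0 else Suc t)"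
  by auto

locale vd =
  fixes D :: vdiag
  assumes wf: "wf_vdiag D" and pos: "0 < nc D"
begin

abbreviation "N \<equiv> npass D"
abbreviation "n \<equiv> nc D"
abbreviation "p \<equiv> partner D"

lemma N_def: "N = 2 * n" by (simp add: npass_def)
lemma Npos: "0 < N" using pos N_def by simp

lemma cr_lt: "t < N \<Longrightarrow> cr D t < n" using wf unfolding wf_vdiag_def by blast

lemma card2: "k < n \<Longrightarrow> card {t. t < N \<and> cr D t = k} = 2" using wf unfolding wf_vdiag_def by blast

lemma opp: "t < N \<Longrightarrow> s < N \<Longrightarrow> t \<noteq> s \<Longrightarrow> cr D t = cr D s \<Longrightarrow>
    lr D s = (\<not> lr D t) \<and> (\<not> virt D (cr D t) \<longrightarrow> ovr D s = (\<not> ovr D t))"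
  using wf unfolding wf_vdiag_def by blast

lemma planar: "num_faces D = n + 2" using wf pos unfolding wf_vdiag_def planar_def by auto

lemma other_ex: assumes "t < N" shows "\<exists>!s. s < N \<and> s \<noteq> t \<and> cr D s = cr D t"
proof -
  have "card {s. s < N \<and> cr D s = cr D t} = 2" using card2 cr_lt assms by blast
  then obtain x y where xy: "{s. s < N \<and> cr D s = cr D t} = {x, y}" "x \<noteq> y"
    by (auto simp: card_2_iff)
  have "t \<in> {x, y}" using xy(1) assms by blast
  have mem: "s \<in> {x, y} \<longleftrightarrow> s < N \<and> cr D s = cr D t" for s using xy(1) by blast
  show ?thesis
  proof (cases "t = x")
    case True
    show ?thesis
    proof (rule ex1I[of _ y])
      show "y < N \<and> y \<noteq> t \<and> cr D y = cr D t" using mem[of y] True xy(2) by simp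
      show "s = y" if "s < N \<and> s \<noteq> t \<and> cr D s = cr D t" for s using mem[of s] that True by blast
    qed
  next
    case False
    then have tx: "t = y" using \<open>t \<in> {x, y}\<close> by blast
    show ?thesis
    proof (rule ex1I[of _ x])
      show "x < N \<and> x \<noteq> t \<and> cr D x = cr D t" using mem[of x] tx xy(2) by simp
      show "s = x" if "s < N \<and> s \<noteq> t \<and> cr D s = cr D t" for s using mem[of s] that tx by blast
    qed
  qed
qed

lemma partner: assumes "t < N"
  shows "p t < N" "p t \<noteq> t" "cr D (p t) = cr D t"
proof -
  have "p t < N \<and> p t \<noteq> t \<and> cr D (p t) = cr D t"
    unfolding partner_def using theI'[OF other_ex[OF assms]] by simp
  then show "p t < N" "p t \<noteq> t" "cr D (p t) = cr D t" by auto
qed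

lemma partner_uniq: assumes "t < N" "s < N" "s \<noteq> t" "cr D s = cr D t" shows "s = p t"
  using other_ex[OF assms(1)] partner[OF assms(1)] assms by blast

lemma pp: "t < N \<Longrightarrow> p (p t) = t"
  using partner_uniq[of "p t" t] partner[of t] by metis

lemma lr_p: "t < N \<Longrightarrow> lr D (p t) = (\<not> lr D t)"
  using opp[of t "p t"] partner[of t] by metis

lemma ovr_p: "t < N \<Longrightarrow> \<not> virt D (cr D t) \<Longrightarrow> ovr D (p t) = (\<not> ovr D t)"
  using opp[of t "p t"] partner[of t] by metis

lemma p_bij: "bij_betw p {..<N} {..<N}"
proof (rule bij_betw_imageI)
  show "inj_on p {..<N}" by (rule inj_onI) (metis lessThan_iff pp)
  show "p ` {..<N} = {..<N}"
  proof
    show "p ` {..<N} \<subseteq> {..<N}" using partner by auto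
    show "{..<N} \<subseteq> p ` {..<N}"
    proof
      fix t assume "t \<in> {..<N}" then show "t \<in> p ` {..<N}"
        using pp[of t] partner(1)[of t] by (metis imageI lessThan_iff)
    qed
  qed
qed


definition H :: "(nat \<times> bool) set" where "H = {..<N} \<times> UNIV"
definition pr :: "nat \<Rightarrow> nat" where "pr t = (t + N - 1) mod N"
definition al :: "nat \<times> bool \<Rightarrow> nat \<times> bool" where
  "al x = (if snd x then (Suc (fst x) mod N, False) else (pr (fst x), True))"
definition ed :: "nat \<times> bool \<Rightarrow> nat" where
  "ed x = (if snd x then fst x else pr (fst x))"
definition alS :: "nat \<Rightarrow> nat \<times> bool \<Rightarrow> nat \<times> bool" where
  "alS m x = (if x \<in> H \<and> ed x < m then al x else x)"
abbreviation nu :: "nat \<times> bool \<Rightarrow> nat \<times> bool" where "nu \<equiv> next_ccw D"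
definition phi :: "nat \<Rightarrow> nat \<times> bool \<Rightarrow> nat \<times> bool" where "phi m = nu \<circ> alS m"
definition h1 :: "nat \<Rightarrow> nat \<times> bool" where "h1 m = (m, True)"
definition h2 :: "nat \<Rightarrow> nat \<times> bool" where "h2 m = (Suc m mod N, False)"

lemma nu_simp: "nu (t, f) = (p t, if lr D t then \<not> f else f)"
  by (simp add: next_ccw_def)

lemma pr_eq: "t < N \<Longrightarrow> pr t = (if t = 0 then N - 1 else t - 1)"
  unfolding pr_def by (rule prd)

lemma pr_lt: "t < N \<Longrightarrow> pr t < N" using pr_eq Npos by auto

lemma suc_pr: "t < N \<Longrightarrow> Suc (pr t) mod N = t"
  using pr_eq[of t] Npos by (cases "t = 0") auto

lemma pr_suc: "t < N \<Longrightarrow> pr (Suc t mod N) = t"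
  using pr_eq[of "Suc t mod N"] Npos sucmod[of t N] by (cases "Suc t = N") auto

lemma inH: "x \<in> H \<longleftrightarrow> fst x < N" by (cases x) (simp add: H_def)

lemma finH: "finite H" by (simp add: H_def)

lemma nu_H: "x \<in> H \<Longrightarrow> nu x \<in> H"
  by (cases x) (simp add: inH nu_simp partner)

lemma nu_inj: "inj_on nu H"
proof (rule inj_onI)
  fix x y assume "x \<in> H" "y \<in> H" "nu x = nu y"
  then show "x = y"
    by (cases x, cases y) (simp add: inH nu_simp split: if_splits; metis pp)
qed

lemma al_H: "x \<in> H \<Longrightarrow> al x \<in> H"
  by (cases x) (auto simp: inH al_def pr_lt Npos)

lemma al_al: "x \<in> H \<Longrightarrow> al (al x) = x"
  by (cases x) (auto simp: inH al_def suc_pr pr_suc Npos)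

lemma ed_al: "x \<in> H \<Longrightarrow> ed (al x) = ed x"
  by (cases x) (auto simp: inH al_def ed_def suc_pr pr_suc Npos)

lemma ed_lt: "x \<in> H \<Longrightarrow> ed x < N"
  by (cases x) (auto simp: inH ed_def pr_lt)

lemma alS_H: "x \<in> H \<Longrightarrow> alS m x \<in> H"
  by (simp add: alS_def al_H)

lemma alS_alS: "x \<in> H \<Longrightarrow> alS m (alS m x) = x"
  by (simp add: alS_def al_H al_al ed_al)

lemma alS_N: "x \<in> H \<Longrightarrow> alS N x = al x"
  by (simp add: alS_def ed_lt)

lemma phi_perm: "perm_on (phi m) H"
proof
  show "finite H" by (rule finH)
  show "phi m x \<in> H" if "x \<in> H" for x using that by (simp add: phi_def alS_H nu_H)
  show "inj_on (phi m) H"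
  proof (rule inj_onI)
    fix x y assume xy: "x \<in> H" "y \<in> H" "phi m x = phi m y"
    then have "alS m x = alS m y" using nu_inj alS_H unfolding phi_def inj_on_def by simp
    then show "x = y" using alS_alS xy by metis
  qed
qed

lemma h12_H: "m < N \<Longrightarrow> h1 m \<in> H" "h2 m \<in> H" "h1 m \<noteq> h2 m"
  by (auto simp: h1_def h2_def inH Npos)

lemma phi_Suc: assumes "m < N" shows "phi (Suc m) = gsw (phi m) (h1 m) (h2 m)"
proof (rule ext)
  fix x
  show "phi (Suc m) x = gsw (phi m) (h1 m) (h2 m) x"
  proof (cases "x \<in> H")
    case False
    then have "x \<noteq> h1 m" "x \<noteq> h2 m" using h12_H assms by auto
    then show ?thesis using False by (simp add: phi_def gsw_def sw_def alS_def)
  next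
    case True
    obtain t f where x: "x = (t, f)" by (cases x)
    have t: "t < N" using True x inH by simp
    show ?thesis
    proof (cases "x = h1 m")
      case True
      then show ?thesis using assms
        by (simp add: phi_def gsw_def sw_def alS_def h1_def h2_def inH ed_def al_def pr_suc Npos)
    next
      case False1: False
      show ?thesis
      proof (cases "x = h2 m")
        case True
        then show ?thesis using assms
          by (simp add: phi_def gsw_def sw_def alS_def h1_def h2_def inH ed_def al_def pr_suc Npos)
      next
        case False
        have "ed x \<noteq> m"
        proof
          assume e: "ed x = m"
          show False
          proof (cases f)
            case True then show False using e False1 x by (simp add: ed_def h1_def)
          next
            case ff: False
            then have "pr t = m" using e x by (simp add: ed_def)
            then have "t = Suc m mod N" using suc_pr[OF t] by simp
            then show False using False x ff by (simp add: h2_def)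
          qed
        qed
        then show ?thesis using False False1
          by (simp add: phi_def gsw_def sw_def alS_def less_Suc_eq)
      qed
    qed
  qed
qed

lemma perm_swap_m: "m < N \<Longrightarrow> perm_swap (phi m) H (h1 m) (h2 m)"
  using phi_perm h12_H by (simp add: perm_swap_def perm_swap_axioms_def)

definition fc :: "nat \<Rightarrow> nat" where "fc m = card (orb (phi m) H ` H)"

lemma leave_eq: "x \<in> H \<Longrightarrow> leave D x = (if snd x then x else (pr (fst x), False))"
  by (cases x) (simp add: leave_def pr_def)

lemma fc_N: "fc N = n + 2"
proof -
  let ?lv = "leave D"
  have darts: "darts D = H" by (simp add: darts_def H_def)
  have lvH: "?lv x \<in> H" if "x \<in> H" for x using that by (cases x) (auto simp: leave_eq inH pr_lt)
  have lvinj: "inj_on ?lv H"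
  proof (rule inj_onI)
    fix x y assume "x \<in> H" "y \<in> H" "?lv x = ?lv y"
    then show "x = y"
      by (cases x, cases y) (auto simp: leave_eq inH split: if_splits; metis suc_pr)
  qed
  have lvimg: "?lv ` H = H" using endo_inj_surj[OF finH _ lvinj] lvH by blast
  have fs: "face_step D (?lv x) = ?lv (phi N x)" if "x \<in> H" for x
  proof -
    have "arrive D (?lv x) = al x" using that
      by (cases x) (auto simp: leave_eq arrive_def al_def inH suc_pr)
    then show ?thesis by (simp add: face_step_def phi_def alS_N that)
  qed
  interpret P: perm_on "phi N" H by (rule phi_perm)
  have orbeq: "orb (face_step D) H (?lv x) = ?lv ` orb (phi N) H x" if x: "x \<in> H" for x
  proof
    show "?lv ` orb (phi N) H x \<subseteq> orb (face_step D) H (?lv x)"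
    proof
      fix d assume "d \<in> ?lv ` orb (phi N) H x"
      then obtain y where y: "y \<in> orb (phi N) H x" "d = ?lv y" by blast
      have "?lv y \<in> orb (face_step D) H (?lv x)" using y(1)
      proof (induction rule: orb_induct)
        case base then show ?case by (rule orb_self)
      next
        case (step z)
        then show ?case using orb_step[OF step(3) lvH[OF step(2)]] fs[OF step(2)] by simp
      qed
      then show "d \<in> orb (face_step D) H (?lv x)" using y by simp
    qed
  next
    show "orb (face_step D) H (?lv x) \<subseteq> ?lv ` orb (phi N) H x"
    proof
      fix d assume "d \<in> orb (face_step D) H (?lv x)"
      then show "d \<in> ?lv ` orb (phi N) H x"
      proof (induction rule: orb_induct)
        case base then show ?case by (rule imageI[OF orb_self])
      next
        case (step z)
        then obtain y where y: "y \<in> orb (phi N) H x" "z = ?lv y" by blast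
        have yH: "y \<in> H" using P.orb_sub[OF x] y(1) by blast
        have "face_step D z = ?lv (phi N y)" using fs[OF yH] y by simp
        moreover have "phi N y \<in> orb (phi N) H x" using orb_step[OF y(1) yH] .
        ultimately show ?case by blast
      qed
    qed
  qed
  have "num_faces D = card (orb (face_step D) H ` H)"
    unfolding num_faces_def orb_def darts by simp
  also have "orb (face_step D) H ` H = image ?lv ` (orb (phi N) H ` H)"
  proof -
    have "orb (face_step D) H ` H = orb (face_step D) H ` (?lv ` H)" using lvimg by simp
    also have "\<dots> = image ?lv ` (orb (phi N) H ` H)" using orbeq by (auto simp: image_image)
    finally show ?thesis .
  qed
  also have "card \<dots> = card (orb (phi N) H ` H)"
  proof (rule card_image)
    have "inj_on (image ?lv) (Pow H)" by (rule inj_on_image_Pow[OF lvinj])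
    moreover have "orb (phi N) H ` H \<subseteq> Pow H" using P.orb_sub by blast
    ultimately show "inj_on (image ?lv) (orb (phi N) H ` H)" using inj_on_subset by blast
  qed
  finally show ?thesis using planar unfolding fc_def by simp
qed


lemma phi0: "phi 0 = nu" by (rule ext) (simp add: phi_def alS_def)

lemma fc0: "fc 0 \<le> n"
proof -
  interpret P: perm_on "phi 0" H by (rule phi_perm)
  let ?O = "orb (phi 0) H"
  have vert: "y \<in> ?O x" if x: "x \<in> H" and y: "y \<in> H" and c: "cr D (fst y) = cr D (fst x)" for x y
  proof -
    obtain t f where xt: "x = (t, f)" by (cases x)
    have t: "t < N" using x xt inH by simp
    define f' where "f' = (if lr D t then \<not> f else f)"
    have s1: "phi 0 (t, f) = (p t, f')" by (simp add: phi0 nu_simp f'_def)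
    have s2: "phi 0 (p t, f') = (t, \<not> f)" using lr_p[OF t] pp[OF t] by (simp add: phi0 nu_simp f'_def)
    have s3: "phi 0 (t, \<not> f) = (p t, \<not> f')" by (simp add: phi0 nu_simp f'_def)
    have H1: "(p t, f') \<in> H" "(t, \<not> f) \<in> H" using t partner(1)[OF t] by (auto simp: inH)
    have "phi 0 x \<in> ?O x" using orb_step[OF orb_self[of x "phi 0" H] x] .
    then have m1: "(p t, f') \<in> ?O x" using s1 xt by simp
    have m2: "(t, \<not> f) \<in> ?O x" using orb_step[OF m1 H1(1)] s2 by simp
    have m3: "(p t, \<not> f') \<in> ?O x" using orb_step[OF m2 H1(2)] s3 by simp
    have m0: "(t, f) \<in> ?O x" using orb_self[of x "phi 0" H] xt by simp
    obtain t' g where yt: "y = (t', g)" by (cases y)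
    have t': "t' < N" using y yt inH by simp
    have "t' = t \<or> t' = p t" using partner_uniq[OF t t'] c xt yt by auto
    then show ?thesis using m0 m1 m2 m3 yt by (cases g; cases f'; cases f) auto
  qed
  define F where "F k = ?O (SOME x. x \<in> H \<and> cr D (fst x) = k)" for k
  have "?O x = F (cr D (fst x))" if x: "x \<in> H" for x
  proof -
    have "\<exists>y. y \<in> H \<and> cr D (fst y) = cr D (fst x)" using x by blast
    then have sy: "(SOME y. y \<in> H \<and> cr D (fst y) = cr D (fst x)) \<in> H \<and>
        cr D (fst (SOME y. y \<in> H \<and> cr D (fst y) = cr D (fst x))) = cr D (fst x)"
      by (rule someI_ex)
    then show ?thesis unfolding F_def using P.orb_eq[OF x vert[OF x]] by metis
  qed
  then have "?O ` H \<subseteq> F ` {..<n}" using cr_lt inH by auto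
  then have "card (?O ` H) \<le> card (F ` {..<n})" by (rule card_mono[rotated]) simp
  also have "\<dots> \<le> n" using card_image_le[of "{..<n}" F] by simp
  finally show ?thesis unfolding fc_def .
qed

definition Ast :: "nat \<Rightarrow> bool" where
  "Ast m \<longleftrightarrow> Suc m < N \<and> (\<forall>t \<le> m. cr D t \<noteq> cr D (Suc m))"

lemma step_count: assumes "m < N"
  shows "fc (Suc m) + (if h2 m \<in> orb (phi m) H (h1 m) then 1 else 2) =
         fc m + (if h2 m \<in> orb (phi (Suc m)) H (h1 m) then 1 else 2)"
proof -
  interpret S: perm_swap "phi m" H "h1 m" "h2 m" by (rule perm_swap_m[OF assms])
  show ?thesis using S.count unfolding fc_def phi_Suc[OF assms] by simp
qed

lemma A_sep: assumes A: "Ast m" shows "h2 m \<notin> orb (phi m) H (h1 m)"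
proof
  assume h: "h2 m \<in> orb (phi m) H (h1 m)"
  interpret P: perm_on "phi m" H by (rule phi_perm)
  have m: "m < N" "Suc m < N" using A by (auto simp: Ast_def)
  let ?k = "cr D (Suc m)"
  have far: "m < t" if "t < N" "cr D t = ?k" for t using A that by (auto simp: Ast_def not_le)
  let ?V = "{x \<in> H. cr D (fst x) = ?k}"
  have "h1 m \<in> ?V"
  proof (rule orb_closed[of _ "phi m" H "h2 m"])
    show "h1 m \<in> orb (phi m) H (h2 m)" using P.orb_sym[OF h12_H(1)[OF m(1)] h] .
    show "h2 m \<in> ?V" using m by (simp add: h2_def inH)
    show "phi m z \<in> ?V" if "z \<in> H" "z \<in> ?V" for z
    proof -
      obtain t f where z: "z = (t, f)" by (cases z)
      have t: "t < N" "cr D t = ?k" using that z inH by auto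
      have "m < t" using far[OF t] .
      then have "\<not> ed z < m" using z t(1) by (auto simp: ed_def pr_eq)
      then have "phi m z = nu z" by (simp add: phi_def alS_def)
      then show ?thesis using z t partner[OF t(1)] by (simp add: nu_simp inH)
    qed
  qed
  then show False using far[of m] m by (simp add: h1_def)
qed

lemma A_step: assumes "Ast m" shows "fc (Suc m) + 1 = fc m"
proof -
  have m: "m < N" using assms by (simp add: Ast_def)
  interpret S: perm_swap "phi m" H "h1 m" "h2 m" by (rule perm_swap_m[OF m])
  have "h2 m \<in> orb (phi (Suc m)) H (h1 m)" using S.merge A_sep[OF assms] phi_Suc[OF m] by simp
  then show ?thesis using step_count[OF m] A_sep[OF assms] by simp
qed

lemma B_step: assumes "m < N" shows "fc (Suc m) \<le> fc m + 1"
  using step_count[OF assms] by (simp split: if_splits)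

lemma B_good: assumes "m < N" "fc (Suc m) = fc m + 1"
  shows "h2 m \<in> orb (phi m) H (h1 m) \<and> h2 m \<notin> orb (phi (Suc m)) H (h1 m)"
  using step_count[OF assms(1)] assms(2) by (simp split: if_splits)

lemma card_less_Suc: "card {x. x < Suc m \<and> P x} = card {x. x < m \<and> P x} + (if P m then 1 else 0)"
proof -
  have "{x. x < Suc m \<and> P x} = {x. x < m \<and> P x} \<union> (if P m then {m} else {})"
    by (auto simp: less_Suc_eq)
  then show ?thesis by (simp add: card_Un_disjoint)
qed

lemma countA: "n - 1 \<le> card {m. m < N \<and> Ast m}"
proof -
  define fp where "fp k = (LEAST t. t < N \<and> cr D t = k)" for k
  have ex: "\<exists>t. t < N \<and> cr D t = k" if "k < n" for k
  proof -
    have "card {t. t < N \<and> cr D t = k} = 2" using card2 that by blast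
    then have "{t. t < N \<and> cr D t = k} \<noteq> {}" by (metis card.empty zero_neq_numeral)
    then show ?thesis by blast
  qed
  have fpP: "fp k < N \<and> cr D (fp k) = k" if "k < n" for k
    unfolding fp_def by (rule LeastI_ex[OF ex[OF that]])
  have fpL: "\<not> (t < N \<and> cr D t = k)" if "t < fp k" for t k
    using that unfolding fp_def by (rule not_less_Least)
  let ?S = "{..<n} - {cr D 0}"
  have c0: "cr D 0 < n" using cr_lt Npos by blast
  have cS: "card ?S = n - 1" using c0 by simp
  have "card ?S \<le> card {m. m < N \<and> Ast m}"
  proof (rule card_inj_on_le)
    show "finite {m. m < N \<and> Ast m}" by simp
    show "inj_on (\<lambda>k. fp k - 1) ?S"
    proof (rule inj_onI)
      fix k k' assume kk: "k \<in> ?S" "k' \<in> ?S" "fp k - 1 = fp k' - 1"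
      have "fp k \<noteq> 0" "fp k' \<noteq> 0" using fpP kk by (metis DiffE insertI1 lessThan_iff)+
      then have "fp k = fp k'" using kk(3) by simp
      then show "k = k'" using fpP kk by (metis DiffE lessThan_iff)
    qed
    show "(\<lambda>k. fp k - 1) ` ?S \<subseteq> {m. m < N \<and> Ast m}"
    proof
      fix m assume "m \<in> (\<lambda>k. fp k - 1) ` ?S"
      then obtain k where k: "k < n" "k \<noteq> cr D 0" "m = fp k - 1" by blast
      have f: "fp k < N" "cr D (fp k) = k" using fpP[OF k(1)] by auto
      have nz: "fp k \<noteq> 0" using f k(2) by (metis)
      have sm: "Suc m = fp k" using nz k(3) by simp
      have "\<forall>t \<le> m. cr D t \<noteq> cr D (Suc m)"
      proof (intro allI impI)
        fix t assume "t \<le> m"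
        then have "t < fp k" using sm by simp
        then show "cr D t \<noteq> cr D (Suc m)" using fpL[of t k] f sm by auto
      qed
      then show "m \<in> {m. m < N \<and> Ast m}" using sm f by (simp add: Ast_def)
    qed
  qed
  then show ?thesis using cS by simp
qed

lemma all_good: assumes "m < N" "\<not> Ast m"
  shows "h2 m \<in> orb (phi m) H (h1 m) \<and> h2 m \<notin> orb (phi (Suc m)) H (h1 m)"
proof -
  define bad where "bad m \<longleftrightarrow> \<not> Ast m \<and> fc (Suc m) \<noteq> fc m + 1" for m
  have inv: "fc m + 2 * card {x. x < m \<and> Ast x} + card {x. x < m \<and> bad x} \<le> fc 0 + m"
    if "m \<le> N" for m
    using that
  proof (induction m)
    case 0 then show ?case by simp
  next
    case (Suc m)
    then have m: "m < N" by simp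
    have IH: "fc m + 2 * card {x. x < m \<and> Ast x} + card {x. x < m \<and> bad x} \<le> fc 0 + m"
      using Suc by simp
    show ?case
    proof (cases "Ast m")
      case True
      then show ?thesis using A_step[OF True] IH unfolding card_less_Suc bad_def by simp
    next
      case False
      then show ?thesis using B_step[OF m] IH unfolding card_less_Suc bad_def by auto
    qed
  qed
  have "fc N + 2 * card {x. x < N \<and> Ast x} + card {x. x < N \<and> bad x} \<le> fc 0 + N"
    using inv by simp
  then have "card {x. x < N \<and> bad x} = 0" using fc_N fc0 countA N_def pos by linarith
  then have "\<not> bad m" using assms(1) by auto
  then show ?thesis using B_good assms unfolding bad_def by blast
qed


definition Hk :: "nat \<Rightarrow> (nat \<times> bool) set" where "Hk k = {x \<in> H. cr D (fst x) = k}"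
definition sg :: "nat \<times> bool \<Rightarrow> int" where "sg x = (if snd x then 1 else -1)"
definition dv :: "nat \<Rightarrow> (nat \<Rightarrow> int) \<Rightarrow> nat \<Rightarrow> int" where
  "dv m c k = (\<Sum>x \<in> Hk k. if ed x < m then sg x * c (ed x) else 0)"
definition cyc :: "nat \<Rightarrow> (nat \<Rightarrow> int) \<Rightarrow> bool" where "cyc m c \<longleftrightarrow> (\<forall>k < n. dv m c k = 0)"
definition bd :: "(nat \<times> bool \<Rightarrow> int) \<Rightarrow> nat \<Rightarrow> int" where
  "bd W e = W (e, True) - W (Suc e mod N, False)"

lemma finHk: "finite (Hk k)" using finH by (simp add: Hk_def)

lemma nu_Hk: "nu ` Hk k = Hk k"
proof -
  have "nu x \<in> Hk k" if "x \<in> Hk k" for x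
    using that nu_H by (cases x) (auto simp: Hk_def nu_simp inH partner)
  moreover have "inj_on nu (Hk k)" using nu_inj inj_on_subset[of nu H "Hk k"] by (auto simp: Hk_def)
  ultimately show ?thesis using endo_inj_surj[OF finHk] by blast
qed

lemma dd: assumes inv: "\<And>x. x \<in> H \<Longrightarrow> W (phi m x) = W x" shows "cyc m (bd W)"
  unfolding cyc_def
proof (intro allI impI)
  fix k assume "k < n"
  have pt: "(if ed x < m then sg x * bd W (ed x) else 0) = W x - W (nu x)" if x: "x \<in> Hk k" for x
  proof -
    have xH: "x \<in> H" using x by (simp add: Hk_def)
    have "W (alS m x) = W (nu x)"
      using inv[OF alS_H[of x m, OF xH]] alS_alS[of x m, OF xH] by (simp add: phi_def)
    moreover have "(if ed x < m then sg x * bd W (ed x) else 0) = W x - W (alS m x)"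
      using xH by (cases x) (auto simp: alS_def ed_def sg_def bd_def al_def inH suc_pr)
    ultimately show ?thesis by simp
  qed
  have "dv m (bd W) k = (\<Sum>x \<in> Hk k. W x - W (nu x))"
    unfolding dv_def using pt by (rule sum.cong[OF refl])
  also have "\<dots> = sum W (Hk k) - sum (W \<circ> nu) (Hk k)" by (simp add: sum_subtractf)
  also have "sum (W \<circ> nu) (Hk k) = sum W (nu ` Hk k)"
    using nu_inj inj_on_subset[of nu H "Hk k"] by (simp add: sum.reindex Hk_def)
  finally show "dv m (bd W) k = 0" using nu_Hk by simp
qed

lemma dv_lin: "dv m (\<lambda>e. c e - a * b e) k = dv m c k - a * dv m b k"
proof -
  have "dv m (\<lambda>e. c e - a * b e) k =
     (\<Sum>x \<in> Hk k. (if ed x < m then sg x * c (ed x) else 0) - a * (if ed x < m then sg x * b (ed x) else 0))"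
    unfolding dv_def by (rule sum.cong) (auto simp: algebra_simps)
  then show ?thesis by (simp add: dv_def sum_subtractf sum_distrib_left)
qed

lemma dv_Suc: "c m = 0 \<Longrightarrow> dv (Suc m) c k = dv m c k"
  unfolding dv_def by (rule sum.cong) (auto simp: less_Suc_eq)

lemma A_far: assumes "Ast m" "y \<in> H" "cr D (fst y) = cr D (Suc m)" shows "m < fst y" "\<not> ed y < m"
proof -
  obtain t f where y: "y = (t, f)" by (cases y)
  have "t < N" using assms y inH by simp
  then show "m < fst y" using assms y by (auto simp: Ast_def not_le)
  then show "\<not> ed y < m" using y \<open>t < N\<close> by (auto simp: ed_def pr_eq)
qed

lemma dv_A: assumes A: "Ast m" shows "dv (Suc m) c (cr D (Suc m)) = - c m"
proof -
  have sm: "Suc m < N" using A by (simp add: Ast_def)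
  have h2: "h2 m = (Suc m, False)" using sm by (simp add: h2_def)
  have pt: "(if ed x < Suc m then sg x * c (ed x) else 0) = (if x = h2 m then - c m else 0)"
    if x: "x \<in> Hk (cr D (Suc m))" for x
  proof -
    obtain t f where xt: "x = (t, f)" by (cases x)
    have xH: "x \<in> H" "cr D (fst x) = cr D (Suc m)" using x by (auto simp: Hk_def)
    have t: "m < t" "t < N" using A_far(1)[OF A xH] xt xH inH by auto
    show ?thesis
    proof (cases f)
      case True then show ?thesis using t xt h2 by (simp add: ed_def)
    next
      case False
      then show ?thesis using t xt h2 by (auto simp: ed_def pr_eq sg_def)
    qed
  qed
  have "h2 m \<in> Hk (cr D (Suc m))" using h2 sm by (simp add: Hk_def inH)
  have "dv (Suc m) c (cr D (Suc m)) = (\<Sum>x \<in> Hk (cr D (Suc m)). if x = h2 m then - c m else 0)"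
    unfolding dv_def by (rule sum.cong[OF refl pt])
  also have "\<dots> = - c m" using \<open>h2 m \<in> Hk (cr D (Suc m))\<close> finHk by (simp add: sum.delta)
  finally show ?thesis .
qed

lemma A_inv: assumes A: "Ast m" "z \<in> H"
  shows "cr D (fst (phi m z)) = cr D (Suc m) \<longleftrightarrow> cr D (fst z) = cr D (Suc m)"
proof -
  have "cr D (fst (nu y)) = cr D (fst y)" if "y \<in> H" for y
    using that by (cases y) (simp add: nu_simp partner inH)
  then have e: "cr D (fst (phi m z)) = cr D (fst (alS m z))" using alS_H[OF A(2)] by (simp add: phi_def)
  show ?thesis
  proof (cases "ed z < m")
    case False then show ?thesis using e by (simp add: alS_def)
  next
    case True
    then have z: "alS m z = al z" using A(2) by (simp add: alS_def)
    have "cr D (fst z) \<noteq> cr D (Suc m)" using A_far(2)[OF A] True by blast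
    moreover have "cr D (fst (al z)) \<noteq> cr D (Suc m)"
      using A_far(2)[OF A(1) al_H[OF A(2)]] True ed_al[OF A(2)] by auto
    ultimately show ?thesis using e z by simp
  qed
qed

lemma claim: "m \<le> N \<Longrightarrow> cyc m c \<Longrightarrow> \<exists>W. (\<forall>x \<in> H. W (phi m x) = W x) \<and> (\<forall>e < m. c e = bd W e)"
proof (induction m arbitrary: c)
  case 0
  show ?case by (rule exI[of _ "\<lambda>_. 0"]) (simp add: phi_def)
next
  case (Suc m)
  have m: "m < N" using Suc by simp
  interpret P: perm_on "phi m" H by (rule phi_perm)
  interpret PS: perm_on "phi (Suc m)" H by (rule phi_perm)
  have ps: "phi (Suc m) x = phi m (sw (h1 m) (h2 m) x)" for x
    using phi_Suc[OF m] by (simp add: gsw_def)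
  have h1H: "h1 m \<in> H" and h2H: "h2 m \<in> H" using h12_H(1)[OF m] h12_H(2) by auto
  show ?case
  proof (cases "Ast m")
    case A: True
    define k' where "k' = cr D (Suc m)"
    have sm: "Suc m < N" using A by (simp add: Ast_def)
    have "k' < n" using cr_lt sm k'_def by simp
    then have "dv (Suc m) c k' = 0" using Suc.prems by (simp add: cyc_def)
    then have cm: "c m = 0" using dv_A[OF A] k'_def by simp
    then have "cyc m c" using Suc.prems dv_Suc by (simp add: cyc_def)
    then obtain W where W: "\<forall>x \<in> H. W (phi m x) = W x" "\<forall>e < m. c e = bd W e"
      using Suc.IH m by fastforce
    define W' where "W' x = (if cr D (fst x) = k' then W (h1 m) else W x)" for x
    have h1k: "cr D (fst (h1 m)) \<noteq> k'" using A by (simp add: Ast_def h1_def k'_def)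
    have h2k: "cr D (fst (h2 m)) = k'" using sm by (simp add: h2_def k'_def)
    have inv: "W' (phi (Suc m) x) = W' x" if x: "x \<in> H" for x
    proof -
      have ai: "cr D (fst (phi m z)) = k' \<longleftrightarrow> cr D (fst z) = k'" if "z \<in> H" for z
        using A_inv[OF A that] k'_def by simp
      show ?thesis
      proof (cases "x = h1 m")
        case True
        then show ?thesis using ps[of x] ai[OF h2H] h2k h1k W'_def by (simp add: sw_def)
      next
        case F1: False
        show ?thesis
        proof (cases "x = h2 m")
          case True
          then have "phi (Suc m) x = phi m (h1 m)" using ps[of x] h12_H(3) by (simp add: sw_def)
          then show ?thesis using ai[OF h1H] h1k h2k True W(1) h1H unfolding W'_def by simp
        next
          case False
          then have "phi (Suc m) x = phi m x" using ps[of x] F1 by (simp add: sw_def)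
          then show ?thesis using ai[OF x] W(1) x unfolding W'_def by simp
        qed
      qed
    qed
    have bnd: "c e = bd W' e" if "e < Suc m" for e
    proof (cases "e < m")
      case True
      have "Suc e mod N = Suc e" using True m by simp
      moreover have "cr D e \<noteq> k'" "cr D (Suc e) \<noteq> k'" using A True by (auto simp: Ast_def k'_def)
      ultimately have "bd W' e = bd W e" by (simp add: bd_def W'_def)
      then show ?thesis using W(2) True by simp
    next
      case False
      then have e: "e = m" using that by simp
      have "bd W' m = W' (h1 m) - W' (h2 m)" by (simp add: bd_def h1_def h2_def)
      also have "\<dots> = 0" using h1k h2k by (simp add: W'_def)
      finally show ?thesis using cm e by simp
    qed
    show ?thesis using inv bnd by blast
  next
    case nA: False
    have good: "h2 m \<in> orb (phi m) H (h1 m)" "h2 m \<notin> orb (phi (Suc m)) H (h1 m)"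
      using all_good[OF m nA] by auto
    define O1 where "O1 = orb (phi (Suc m)) H (h1 m)"
    define \<chi> where "\<chi> x = (if x \<in> O1 then 1 else (0::int))" for x
    have chinv: "\<chi> (phi (Suc m) x) = \<chi> x" if "x \<in> H" for x
      using PS.orb_inv[OF that] by (simp add: \<chi>_def O1_def)
    have cb: "cyc (Suc m) (bd \<chi>)" using dd chinv by blast
    have bm: "bd \<chi> m = 1"
    proof -
      have "bd \<chi> m = \<chi> (h1 m) - \<chi> (h2 m)" by (simp add: bd_def h1_def h2_def)
      then show ?thesis using good(2) orb_self[of "h1 m"] by (simp add: \<chi>_def O1_def)
    qed
    define c' where "c' e = c e - c m * bd \<chi> e" for e
    have "cyc (Suc m) c'" using Suc.prems cb dv_lin unfolding cyc_def c'_def by simp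
    moreover have "c' m = 0" using bm by (simp add: c'_def)
    ultimately have "cyc m c'" using dv_Suc by (simp add: cyc_def)
    then obtain W where W: "\<forall>x \<in> H. W (phi m x) = W x" "\<forall>e < m. c' e = bd W e"
      using Suc.IH m by fastforce
    have W12: "W (h2 m) = W (h1 m)" using orb_const[OF good(1)] W(1) by blast
    have inv: "W (phi (Suc m) x) = W x" if x: "x \<in> H" for x
    proof (cases "x = h1 m")
      case True then show ?thesis using ps[of x] W(1) h2H W12 by (simp add: sw_def)
    next
      case F1: False
      show ?thesis
      proof (cases "x = h2 m")
        case True
        then have "phi (Suc m) x = phi m (h1 m)" using ps[of x] h12_H(3) by (simp add: sw_def)
        then show ?thesis using W(1) h1H W12 True by simp
      next
        case False
        then show ?thesis using ps[of x] F1 W(1) x by (simp add: sw_def)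
      qed
    qed
    define W' where "W' x = W x + c m * \<chi> x" for x
    have inv': "W' (phi (Suc m) x) = W' x" if "x \<in> H" for x using inv[OF that] chinv[OF that] by (simp add: W'_def)
    have bnd: "c e = bd W' e" if "e < Suc m" for e
    proof (cases "e < m")
      case True
      then show ?thesis using W(2) by (simp add: bd_def W'_def c'_def algebra_simps)
    next
      case False
      then have e: "e = m" using that by simp
      have "bd W m = 0" using W12 by (simp add: bd_def h1_def h2_def)
      then show ?thesis using e bm by (simp add: bd_def W'_def algebra_simps)
    qed
    show ?thesis using inv' bnd by blast
  qed
qed


lemma ins_char: assumes "s < N" "o' < N" "u < N" "o' \<noteq> u"
  shows "on_path D o' u s \<longleftrightarrow> s \<noteq> o' \<and> (if o' < u then o' < s \<and> s < u else o' < s \<or> s < u)"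
  using assms unfolding on_path_def by (auto simp: modsub split: if_splits)

lemma ins_pr: assumes "t < N" "o' < N" "u < N" "o' \<noteq> u"
  shows "(on_path D o' u (pr t) \<or> pr t = o') \<longleftrightarrow> (on_path D o' u t \<or> t = u)"
proof -
  have prt: "pr t < N" using pr_lt assms by simp
  show ?thesis
    using ins_char[OF prt assms(2-4)] ins_char[OF assms] pr_eq[OF assms(1)] assms Npos
    by (auto split: if_splits)
qed

lemma T0: assumes o: "o' < N" and u: "u = p o'"
  shows "(\<Sum>s<N. if on_path D o' u s then (if lr D s then 1 else -1) else (0::int)) = 0"
proof -
  have uN: "u < N" and ou: "o' \<noteq> u" and po: "p u = o'" using partner[OF o] pp[OF o] u by auto
  let ?ins = "on_path D o' u"
  define c0 where "c0 e = (if ?ins e \<or> e = o' then 1 else (0::int))" for e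
  have nio: "\<not> ?ins o'" by (simp add: on_path_def)
  have niu: "\<not> ?ins u" by (simp add: on_path_def)
  have c0e: "c0 t = (if ?ins t then 1 else 0) + (if t = o' then 1 else 0)" for t
    using nio by (auto simp: c0_def)
  have c0pr: "c0 (pr t) = (if ?ins t then 1 else 0) + (if t = u then 1 else 0)" if "t < N" for t
    using ins_pr[OF that o uN ou] niu by (auto simp: c0_def)
  have "cyc N c0" unfolding cyc_def
  proof (intro allI impI)
    fix k assume "k < n"
    define Pk where "Pk = {t. t < N \<and> cr D t = k}"
    have HkP: "Hk k = Pk \<times> UNIV" by (auto simp: Hk_def Pk_def inH)
    have "dv N c0 k = (\<Sum>x \<in> Pk \<times> UNIV. if ed x < N then sg x * c0 (ed x) else 0)"
      by (simp add: dv_def HkP)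
    also have "\<dots> = (\<Sum>t \<in> Pk. \<Sum>b \<in> UNIV. if ed (t, b) < N then sg (t, b) * c0 (ed (t, b)) else 0)"
      by (rule sum.cartesian_product')
    also have "\<dots> = (\<Sum>t \<in> Pk. (if t = o' then 1 else 0) - (if t = u then 1 else 0))"
    proof (rule sum.cong[OF refl])
      fix t assume "t \<in> Pk"
      then have t: "t < N" by (simp add: Pk_def)
      have sb: "(\<Sum>b \<in> (UNIV::bool set). G b) = G True + G False" for G :: "bool \<Rightarrow> int"
        by (simp add: UNIV_bool)
      show "(\<Sum>b \<in> UNIV. if ed (t, b) < N then sg (t, b) * c0 (ed (t, b)) else 0) =
          (if t = o' then 1 else 0) - (if t = u then 1 else 0)"
        unfolding sb using t pr_lt[OF t] c0e[of t] c0pr[OF t] by (simp add: ed_def sg_def)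
    qed
    also have "\<dots> = 0"
    proof -
      have fin: "finite Pk" by (simp add: Pk_def)
      have "o' \<in> Pk \<longleftrightarrow> u \<in> Pk" using partner[OF o] u o uN by (simp add: Pk_def)
      then show ?thesis using fin by (simp add: sum_subtractf sum.delta)
    qed
    finally show "dv N c0 k = 0" .
  qed
  then obtain W where W: "\<forall>x \<in> H. W (phi N x) = W x" "\<forall>e < N. c0 e = bd W e"
    using claim by blast
  have wnu: "W (nu y) = W (al y)" if "y \<in> H" for y
  proof -
    have "W (phi N (al y)) = W (al y)" using W(1) al_H[OF that] by blast
    then show ?thesis using al_al[OF that] by (simp add: phi_def alS_N al_H[OF that])
  qed
  have bnd: "c0 e = W (e, True) - W (Suc e mod N, False)" if "e < N" for e
    using W(2) that by (simp add: bd_def)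
  define q where "q t = p t" for t
  have Xeq: "W (t, True) - W (t, False) = (if lr D t then c0 (pr t) - c0 (p t) else c0 t + c0 (p t))"
    if t: "t < N" for t
  proof -
    have qN: "p t < N" and qq: "p (p t) = t" and lq: "lr D (p t) = (\<not> lr D t)"
      using partner[OF t] pp[OF t] lr_p[OF t] by auto
    have e1: "W (nu (t, True)) = W (t, True) - c0 t"
      using wnu[of "(t, True)"] bnd[OF t] t by (simp add: inH al_def)
    have e2: "W (nu (t, False)) = c0 (pr t) + W (t, False)"
      using wnu[of "(t, False)"] bnd[OF pr_lt[OF t]] t suc_pr[OF t] by (simp add: inH al_def)
    have e3: "W (nu (p t, True)) = W (p t, True) - c0 (p t)"
      using wnu[of "(p t, True)"] bnd[OF qN] qN by (simp add: inH al_def)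
    show ?thesis
    proof (cases "lr D t")
      case True
      then show ?thesis using e1 e2 e3 lq qq by (simp add: nu_simp)
    next
      case False
      then show ?thesis using e1 e2 e3 lq qq by (simp add: nu_simp)
    qed
  qed
  have tel: "(\<Sum>t<N. W (t, True) - W (t, False)) = (\<Sum>t<N. c0 t)"
  proof -
    have inj: "inj_on (\<lambda>t. Suc t mod N) {..<N}"
      by (rule inj_onI) (metis lessThan_iff pr_suc)
    have img: "(\<lambda>t. Suc t mod N) ` {..<N} = {..<N}"
    proof (rule endo_inj_surj[OF _ _ inj])
      show "(\<lambda>t. Suc t mod N) ` {..<N} \<subseteq> {..<N}" using Npos by auto
    qed simp
    have "(\<Sum>t<N. W (Suc t mod N, False)) = (\<Sum>t<N. W (t, False))"
      using sum.reindex[OF inj, of "\<lambda>t. W (t, False)"] img by simp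
    then show ?thesis using bnd by (simp add: sum_subtractf)
  qed
  define I where "I t = (if ?ins t then 1 else (0::int))" for t
  define M where "M t = (if t = o' \<and> \<not> lr D t then 1 else 0) + (if t = u \<and> \<not> lr D t then 1 else (0::int))" for t
  have Xpt: "W (t, True) - W (t, False) = I t + (if lr D t then -1 else 1) * I (p t) + M t" if t: "t < N" for t
  proof -
    have pe: "(p t = o') = (t = u)" using pp[OF t] po u by metis
    have a: "c0 (p t) = I (p t) + (if t = u then 1 else 0)" using c0e[of "p t"] pe by (simp add: I_def)
    have b: "c0 (pr t) = I t + (if t = u then 1 else 0)" using c0pr[OF t] by (simp add: I_def)
    have c: "c0 t = I t + (if t = o' then 1 else 0)" using c0e[of t] by (simp add: I_def)
    show ?thesis
    proof (cases "lr D t")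
      case True
      then have "M t = 0" by (simp add: M_def)
      then show ?thesis using Xeq[OF t] True a b by simp
    next
      case False
      then have "M t = (if t = o' then 1 else 0) + (if t = u then 1 else 0)" by (simp add: M_def)
      then show ?thesis using Xeq[OF t] False a c by simp
    qed
  qed
  have sumM: "(\<Sum>t<N. M t) = 1"
  proof -
    define A0 where "A0 = (if lr D o' then 0 else (1::int))"
    define B0 where "B0 = (if lr D u then 0 else (1::int))"
    have "M t = (if t = o' then A0 else 0) + (if t = u then B0 else 0)" for t
      by (simp add: M_def A0_def B0_def)
    then have "(\<Sum>t<N. M t) = (\<Sum>t<N. (if t = o' then A0 else 0)) + (\<Sum>t<N. (if t = u then B0 else 0))"
      by (simp add: sum.distrib)
    also have "\<dots> = A0 + B0" using o uN by (simp add: sum.delta)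
    finally show ?thesis using lr_p[OF o] u by (simp add: A0_def B0_def)
  qed
  have "(\<Sum>t<N. I t) + 1 = (\<Sum>t<N. c0 t)" using o by (simp add: c0e I_def sum.distrib)
  also have "\<dots> = (\<Sum>t<N. I t + (if lr D t then -1 else 1) * I (p t) + M t)"
    using tel Xpt by simp
  also have "\<dots> = (\<Sum>t<N. I t) + (\<Sum>t<N. (if lr D t then -1 else 1) * I (p t)) + 1"
    using sumM by (simp add: sum.distrib)
  finally have z: "(\<Sum>t<N. (if lr D t then -1 else 1) * I (p t)) = 0" by simp
  define h where "h s = (if lr D (p s) then -1 else 1) * I s" for s
  have "(\<Sum>t<N. (if lr D t then -1 else 1) * I (p t)) = (\<Sum>t<N. h (p t))"
    by (rule sum.cong) (auto simp: h_def pp)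
  also have "\<dots> = sum h (p ` {..<N})"
    using sum.reindex[of p "{..<N}" h] p_bij by (simp add: bij_betw_def)
  also have "\<dots> = (\<Sum>s<N. h s)" using p_bij by (simp add: bij_betw_def)
  also have "\<dots> = (\<Sum>s<N. if ?ins s then (if lr D s then 1 else -1) else 0)"
    by (rule sum.cong) (auto simp: h_def I_def lr_p)
  finally show ?thesis using z by simp
qed


lemma ou: assumes "k \<in> real_crossings D"
  shows "opass D k < N" "cr D (opass D k) = k" "ovr D (opass D k)"
        "upass D k = p (opass D k)" "\<not> virt D k"
proof -
  have k: "k < n" "\<not> virt D k" using assms by (auto simp: real_crossings_def)
  have "card {t. t < N \<and> cr D t = k} = 2" using card2 k by blast
  then have "{t. t < N \<and> cr D t = k} \<noteq> {}" by (metis card.empty zero_neq_numeral)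
  then obtain t0 where t0: "t0 < N" "cr D t0 = k" by blast
  let ?q = "p t0"
  have q: "?q < N" "cr D ?q = k" "?q \<noteq> t0" "ovr D ?q = (\<not> ovr D t0)"
    using partner[OF t0(1)] ovr_p[OF t0(1)] t0 k by auto
  have two: "t = t0 \<or> t = ?q" if "t < N" "cr D t = k" for t
    using partner_uniq[OF t0(1) that(1)] that t0 by auto
  obtain o' u where ouv: "o' < N" "cr D o' = k" "ovr D o'" "u < N" "cr D u = k" "\<not> ovr D u" "u = p o'"
    "\<And>t. t < N \<Longrightarrow> cr D t = k \<Longrightarrow> t = o' \<or> t = u"
  proof (cases "ovr D t0")
    case True then show ?thesis using that[of t0 ?q] t0 q two by auto
  next
    case False then show ?thesis using that[of ?q t0] t0 q two pp[OF t0(1)] by auto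
  qed
  have oe: "opass D k = o'" unfolding opass_def
    by (rule the_equality) (use ouv in auto)
  have ue: "upass D k = u" unfolding upass_def
    by (rule the_equality) (use ouv in auto)
  show "opass D k < N" "cr D (opass D k) = k" "ovr D (opass D k)" "upass D k = p (opass D k)" "\<not> virt D k"
    using oe ue ouv k by auto
qed

definition gv :: "nat \<Rightarrow> int" where
  "gv s = (if virt D (cr D s) then (if lr D s then -1 else 1) else 0)"

lemma shift_eq: "shift D t = (\<Sum>s<t. gv s)"
proof -
  have "{s. s < t \<and> virt D (cr D s)} = {s \<in> {..<t}. virt D (cr D s)}" by auto
  then have "shift D t = (\<Sum>s \<in> {s \<in> {..<t}. virt D (cr D s)}. if lr D s then -1 else 1)"
    unfolding shift_def by simp
  also have "\<dots> = (\<Sum>s<t. if virt D (cr D s) then (if lr D s then -1 else 1) else 0)"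
    by (rule sum.inter_filter) simp
  finally show ?thesis by (simp add: gv_def)
qed

lemma gv_total: "(\<Sum>s<N. gv s) = 0"
proof -
  have "(\<Sum>s<N. gv s) = sum gv (p ` {..<N})" using p_bij by (simp add: bij_betw_def)
  also have "\<dots> = (\<Sum>s<N. gv (p s))"
    using sum.reindex[of p "{..<N}" gv] p_bij by (simp add: bij_betw_def)
  also have "\<dots> = (\<Sum>s<N. - gv s)"
    by (rule sum.cong) (auto simp: gv_def partner lr_p)
  finally show ?thesis by (simp add: sum_negf)
qed

lemma ind_shift: assumes k: "k \<in> real_crossings D"
  shows "ind D k = shift D (upass D k) - shift D (opass D k)"
proof -
  let ?o = "opass D k" and ?u = "upass D k"
  have o: "?o < N" and u: "?u = p ?o" and rk: "\<not> virt D (cr D ?o)"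
    using ou[OF k] by auto
  have uN: "?u < N" and neq: "?o \<noteq> ?u" using partner[OF o] u by auto
  have lt: "(\<Sum>s<N. if s < t then gv s else 0) = (\<Sum>s<t. gv s)" if "t < N" for t
  proof -
    have "{s \<in> {..<N}. s < t} = {..<t}" using that by auto
    then show ?thesis using sum.inter_filter[of "{..<N}" gv "\<lambda>s. s < t"] by simp
  qed
  let ?ins = "on_path D ?o ?u"
  let ?L = "\<lambda>s. if lr D s then 1 else (-1::int)"
  have "{s. ?ins s \<and> \<not> virt D (cr D s)} = {s \<in> {..<N}. ?ins s \<and> \<not> virt D (cr D s)}"
    by (auto simp: on_path_def)
  then have "ind D k = (\<Sum>s \<in> {s \<in> {..<N}. ?ins s \<and> \<not> virt D (cr D s)}. ?L s)"
    unfolding ind_def by simp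
  also have "\<dots> = (\<Sum>s<N. if ?ins s \<and> \<not> virt D (cr D s) then ?L s else 0)"
    by (rule sum.inter_filter) simp
  also have "\<dots> = (\<Sum>s<N. if ?ins s then ?L s else 0) + (\<Sum>s<N. if ?ins s then gv s else 0)"
    unfolding sum.distrib[symmetric] by (rule sum.cong) (auto simp: gv_def)
  also have "(\<Sum>s<N. if ?ins s then ?L s else 0) = 0" using T0[OF o u] by simp
  also have "(\<Sum>s<N. if ?ins s then gv s else 0) =
      (\<Sum>s<N. (if s < ?u then gv s else 0) - (if s < ?o then gv s else 0) + (if ?u < ?o then gv s else 0))"
  proof (rule sum.cong[OF refl])
    fix s assume "s \<in> {..<N}"
    then have s: "s < N" by simp
    show "(if ?ins s then gv s else 0) =
        (if s < ?u then gv s else 0) - (if s < ?o then gv s else 0) + (if ?u < ?o then gv s else 0)"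
    proof (cases "s = ?o")
      case True then show ?thesis using rk by (simp add: gv_def)
    next
      case False
      then show ?thesis using ins_char[OF s o uN neq] neq by (auto split: if_splits)
    qed
  qed
  also have "\<dots> = (\<Sum>s<N. if s < ?u then gv s else 0) - (\<Sum>s<N. if s < ?o then gv s else 0)
      + (if ?u < ?o then (\<Sum>s<N. gv s) else 0)"
    by (simp add: sum.distrib sum_subtractf)
  also have "(\<Sum>s<N. if s < ?u then gv s else 0) - (\<Sum>s<N. if s < ?o then gv s else 0)
      + (if ?u < ?o then (\<Sum>s<N. gv s) else 0) = shift D ?u - shift D ?o"
    using lt[OF o] lt[OF uN] gv_total by (simp add: shift_eq)
  finally show ?thesis by simp
qed

end


lemma res: fixes r q a c :: int
  assumes "0 < r" "1 \<le> q" "q \<le> r" "0 \<le> c" "c < r"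
  shows "(q - 1 - a) mod r = c \<longleftrightarrow> q = (c + a) mod r + 1"
proof
  assume h: "(q - 1 - a) mod r = c"
  have "(q - 1) mod r = ((q - 1 - a) mod r + a) mod r" by (simp add: mod_add_left_eq)
  then have "(q - 1) mod r = (c + a) mod r" using h by simp
  moreover have "(q - 1) mod r = q - 1" using assms by simp
  ultimately show "q = (c + a) mod r + 1" by simp
next
  assume h: "q = (c + a) mod r + 1"
  have "(q - 1 - a) mod r = ((c + a) mod r - a) mod r" using h by simp
  also have "\<dots> = (c + a - a) mod r" by (simp add: mod_diff_left_eq)
  also have "\<dots> = c" using assms by simp
  finally show "(q - 1 - a) mod r = c" .
qed

lemma mcomp_iff: assumes "0 < r" "1 \<le> i"
  shows "mcomp D r t q = i \<longleftrightarrow> (int q - 1 - shift D t) mod int r = int i - 1"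
proof -
  have "0 \<le> (int q - 1 - shift D t) mod int r" using assms by simp
  then show ?thesis unfolding mcomp_def using assms by linarith
qed

lemma pset: assumes r: "0 < r" and i: "1 \<le> i" "i \<le> r" and j: "1 \<le> j" "j \<le> r"
  shows "{q \<in> {1..r}. mcomp D r a q = i \<and> mcomp D r b q = j} =
    (if [shift D b - shift D a = int i - int j] (mod int r)
     then {nat ((int i - 1 + shift D a) mod int r) + 1} else {})"
proof -
  let ?sa = "shift D a" and ?sb = "shift D b"
  define q0 where "q0 = (int i - 1 + ?sa) mod int r + 1"
  have b1: "(int i - 1 + ?sa) mod int r < int r" by (rule pos_mod_bound) (simp add: r)
  have b0: "0 \<le> (int i - 1 + ?sa) mod int r" by (rule pos_mod_sign) (simp add: r)
  have q0r: "1 \<le> q0" "q0 \<le> int r" using b0 b1 unfolding q0_def by linarith+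
  have ca: "mcomp D r a q = i \<longleftrightarrow> int q = q0" if "q \<in> {1..r}" for q
    using mcomp_iff[OF r i(1)] res[of "int r" "int q" "int i - 1" ?sa] r i that unfolding q0_def by auto
  have cb: "mcomp D r b (nat q0) = j \<longleftrightarrow> [?sb - ?sa = int i - int j] (mod int r)"
  proof -
    have "mcomp D r b (nat q0) = j \<longleftrightarrow> (q0 - 1 - ?sb) mod int r = int j - 1"
      using mcomp_iff[where D=D and t=b and q="nat q0", OF r j(1)] q0r by simp
    also have "(q0 - 1 - ?sb) mod int r = (int i - 1 + ?sa - ?sb) mod int r"
      unfolding q0_def by (simp add: mod_diff_left_eq)
    also have "((int i - 1 + ?sa - ?sb) mod int r = int j - 1) \<longleftrightarrow>
        (int i - 1 + ?sa - ?sb) mod int r = (int j - 1) mod int r" using j by simp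
    also have "\<dots> \<longleftrightarrow> int r dvd ((int i - 1 + ?sa - ?sb) - (int j - 1))" by (rule mod_eq_dvd_iff)
    also have "\<dots> \<longleftrightarrow> int r dvd ((?sb - ?sa) - (int i - int j))"
    proof -
      have "(int i - 1 + ?sa - ?sb) - (int j - 1) = - ((?sb - ?sa) - (int i - int j))" by simp
      then show ?thesis by (simp only: dvd_minus_iff)
    qed
    also have "\<dots> \<longleftrightarrow> [?sb - ?sa = int i - int j] (mod int r)" by (simp add: cong_iff_dvd_diff)
    finally show ?thesis .
  qed
  show ?thesis
  proof (cases "[?sb - ?sa = int i - int j] (mod int r)")
    case True
    have "{q \<in> {1..r}. mcomp D r a q = i \<and> mcomp D r b q = j} = {nat q0}"
    proof
      show "{q \<in> {1..r}. mcomp D r a q = i \<and> mcomp D r b q = j} \<subseteq> {nat q0}"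
      proof
        fix q assume "q \<in> {q \<in> {1..r}. mcomp D r a q = i \<and> mcomp D r b q = j}"
        then have "q \<in> {1..r}" "mcomp D r a q = i" by auto
        then have "int q = q0" using ca by blast
        then show "q \<in> {nat q0}" by simp
      qed
      have "nat q0 \<in> {1..r}" using q0r by auto
      then show "{nat q0} \<subseteq> {q \<in> {1..r}. mcomp D r a q = i \<and> mcomp D r b q = j}"
        using ca[of "nat q0"] cb True q0r by auto
    qed
    moreover have "nat q0 = nat ((int i - 1 + ?sa) mod int r) + 1" using b0 unfolding q0_def by simp
    ultimately show ?thesis using True by simp
  next
    case False
    have "{q \<in> {1..r}. mcomp D r a q = i \<and> mcomp D r b q = j} = {}"
    proof (rule ccontr)
      assume "{q \<in> {1..r}. mcomp D r a q = i \<and> mcomp D r b q = j} \<noteq> {}"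
      then obtain q where q: "q \<in> {1..r}" "mcomp D r a q = i" "mcomp D r b q = j" by blast
      then have "int q = q0" using ca by blast
      then have "q = nat q0" by simp
      then show False using cb q False by simp
    qed
    then show ?thesis using False by simp
  qed
qed

lemma Lk_eq: assumes r: "0 < r" and i: "1 \<le> i" "i \<le> r" and j: "1 \<le> j" "j \<le> r"
  shows "Lk_mplx D r i j = (\<Sum>k \<in> {k \<in> real_crossings D.
     [shift D (upass D k) - shift D (opass D k) = int i - int j] (mod int r)}. csign D k)"
proof -
  have fin: "finite (real_crossings D)" by (simp add: real_crossings_def)
  have set: "{c \<in> mplx_real_crossings D r. mplx_over_comp D r c = i \<and> mplx_under_comp D r c = j}
     = Sigma (real_crossings D) (\<lambda>k. {q \<in> {1..r}. mcomp D r (opass D k) q = i \<and> mcomp D r (upass D k) q = j})"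
    by (auto simp: mplx_real_crossings_def mplx_over_comp_def mplx_under_comp_def)
  have "Lk_mplx D r i j = (\<Sum>k \<in> real_crossings D. \<Sum>q \<in> {q \<in> {1..r}. mcomp D r (opass D k) q = i \<and> mcomp D r (upass D k) q = j}. csign D k)"
  proof -
    let ?B = "\<lambda>k. {q \<in> {1..r}. mcomp D r (opass D k) q = i \<and> mcomp D r (upass D k) q = j}"
    have "(\<Sum>k \<in> real_crossings D. \<Sum>q \<in> ?B k. csign D k) = (\<Sum>(k, q) \<in> Sigma (real_crossings D) ?B. csign D k)"
      by (rule sum.Sigma) (use fin in auto)
    also have "\<dots> = (\<Sum>c \<in> Sigma (real_crossings D) ?B. csign D (fst c))" by (simp add: split_def)
    finally show ?thesis unfolding Lk_mplx_def set mplx_sign_def by simp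
  qed
  also have "\<dots> = (\<Sum>k \<in> real_crossings D.
      if [shift D (upass D k) - shift D (opass D k) = int i - int j] (mod int r) then csign D k else 0)"
    by (rule sum.cong[OF refl]) (simp only: pset[OF r i j], simp)
  also have "\<dots> = (\<Sum>k \<in> {k \<in> real_crossings D.
     [shift D (upass D k) - shift D (opass D k) = int i - int j] (mod int r)}. csign D k)"
    using fin by (simp add: sum.inter_filter)
  finally show ?thesis .
qed

theorem theorem1p2:
  fixes D :: vdiag and r i j :: nat
  assumes "wf_vdiag D"
    and "r \<ge> 2"
    and "1 \<le> i" and "i \<le> r" and "1 \<le> j" and "j \<le> r" and "i \<noteq> j"
  shows "Lk_mplx D r i j =
           (\<Sum>n \<in> {n. [n = int i - int j] (mod int r) \<and> J D n \<noteq> 0}. J D n)"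
proof -
  have r: "0 < r" using assms by simp
  have L: "Lk_mplx D r i j = (\<Sum>k \<in> {k \<in> real_crossings D.
     [shift D (upass D k) - shift D (opass D k) = int i - int j] (mod int r)}. csign D k)"
    using Lk_eq[OF r assms(3-6)] .
  show ?thesis
  proof (cases "nc D = 0")
    case True
    then have "real_crossings D = {}" by (simp add: real_crossings_def)
    then have "J D n = 0" for n by (simp add: J_def)
    then show ?thesis using L \<open>real_crossings D = {}\<close> by simp
  next
    case False
    interpret vd D by unfold_locales (use assms(1) False in auto)
    define S where "S = {k \<in> real_crossings D. [ind D k = int i - int j] (mod int r)}"
    have fin: "finite (real_crossings D)" by (simp add: real_crossings_def)
    have finS: "finite S" using fin by (simp add: S_def)
    have "Lk_mplx D r i j = sum (csign D) S"
      unfolding L S_def using ind_shift by (metis (no_types, lifting))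
    also have "\<dots> = (\<Sum>n \<in> ind D ` S. sum (csign D) {k \<in> S. ind D k = n})"
      using finS by (rule sum.image_gen)
    also have "\<dots> = (\<Sum>n \<in> ind D ` S. J D n)"
    proof (rule sum.cong[OF refl])
      fix n assume "n \<in> ind D ` S"
      then have "[n = int i - int j] (mod int r)" by (auto simp: S_def)
      then have "{k \<in> S. ind D k = n} = {k \<in> real_crossings D. ind D k = n}" by (auto simp: S_def)
      then show "sum (csign D) {k \<in> S. ind D k = n} = J D n" by (simp add: J_def)
    qed
    also have "\<dots> = (\<Sum>n \<in> {n. [n = int i - int j] (mod int r) \<and> J D n \<noteq> 0}. J D n)"
    proof (rule sum.mono_neutral_right)
      show "finite (ind D ` S)" using finS by simp
      show "{n. [n = int i - int j] (mod int r) \<and> J D n \<noteq> 0} \<subseteq> ind D ` S"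
      proof
        fix n assume n: "n \<in> {n. [n = int i - int j] (mod int r) \<and> J D n \<noteq> 0}"
        then have "J D n \<noteq> 0" by simp
        then have "{k \<in> real_crossings D. ind D k = n} \<noteq> {}" unfolding J_def by (metis sum.empty)
        then obtain k where "k \<in> real_crossings D" "ind D k = n" by blast
        then show "n \<in> ind D ` S" using n unfolding S_def by blast
      qed
      show "\<forall>n \<in> ind D ` S - {n. [n = int i - int j] (mod int r) \<and> J D n \<noteq> 0}. J D n = 0"
        by (auto simp: S_def)
    qed
    finally show ?thesis .
  qed
qed

end
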